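(* Let $(\mathfrak{g},\langle\cdot,\cdot\rangle)$ be a quadratic Lie algebra with $H^2(\mathfrak{g})=\{0\}$ and let $(\mathfrak{h},\theta_1,\dots,\theta_k)$ be a $k$-symplectic structure on $\mathfrak{g}$. Then $\mathfrak{h}$ is degenerate with respect to $\langle\cdot,\cdot\rangle$, i.e. the restriction of $\langle\cdot,\cdot\rangle$ to $\mathfrak{h}$ is degenerate.
   Context: A quadratic Lie algebra is a finite-dimensional real Lie algebra $\mathfrak{g}$ endowed with a nondegenerate symmetric bilinear form $\langle\cdot,\cdot\rangle$ which is invariant: $\langle [u,v],w\rangle+\langle [u,w],v\rangle=0$ for all $u,v,w\in\mathfrak{g}$. $H^2(\mathfrak{g})$ denotes the second Chevalley–Eilenberg cohomology group of $\mathfrak{g}$ with trivial real coefficients. A $k$-symplectic structure on a real Lie algebra $\mathfrak{g}$ of dimension $n(k+1)$ ($n,k\ge1$) is a pair consisting of a Lie subalgebra $\mathfrak{h}\subset\mathfrak{g}$ of dimension $nk$ and a family $(\theta_1,\dots,\theta_k)$ of skew-symmetric bilinear forms on $\mathfrak{g}$ such that: (i) $\bigcap_{i=1}^k\ker\theta_i=\{0\}$, where $\ker\theta_i=\{u\in\mathfrak{g}:\theta_i(u,v)=0\ \forall v\in\mathfrak{g}\}$; (ii) each $\theta_i$ is a 2-cocycle: $\theta_i([u,v],w)+\theta_i([v,w],u)+\theta_i([w,u],v)=0$ for all $u,v,w$; (iii) $\theta_i(u,v)=0$ for all $u,v\in\mathfrak{h}$ and all $i$. *)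

theory Defs
  imports "HOL-Analysis.Analysis"
begin

text \<open>A finite-dimensional real vector space is modelled by a type of class euclidean_space
(its built-in inner product plays no role).\<close>

definition lie_bracket :: "('a::euclidean_space \<Rightarrow> 'a \<Rightarrow> 'a) \<Rightarrow> bool" where
  "lie_bracket br \<longleftrightarrow> bilinear br \<and> (\<forall>u. br u u = 0) \<and>
     (\<forall>u v w. br u (br v w) + br v (br w u) + br w (br u v) = 0)"

definition quadratic_form :: "('a::euclidean_space \<Rightarrow> 'a \<Rightarrow> 'a) \<Rightarrow> ('a \<Rightarrow> 'a \<Rightarrow> real) \<Rightarrow> bool" where
  "quadratic_form br B \<longleftrightarrow> bilinear B \<and> (\<forall>u v. B u v = B v u) \<and>
     (\<forall>u. (\<forall>v. B u v = 0) \<longrightarrow> u = 0) \<and>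
     (\<forall>u v w. B (br u v) w + B (br u w) v = 0)"

definition skew_form :: "('a::euclidean_space \<Rightarrow> 'a \<Rightarrow> real) \<Rightarrow> bool" where
  "skew_form \<theta> \<longleftrightarrow> bilinear \<theta> \<and> (\<forall>u v. \<theta> u v = - \<theta> v u)"

definition cocycle2 :: "('a::euclidean_space \<Rightarrow> 'a \<Rightarrow> 'a) \<Rightarrow> ('a \<Rightarrow> 'a \<Rightarrow> real) \<Rightarrow> bool" where
  "cocycle2 br \<theta> \<longleftrightarrow> (\<forall>u v w. \<theta> (br u v) w + \<theta> (br v w) u + \<theta> (br w u) v = 0)"

text \<open>H^2(g) = 0 with trivial real coefficients: every skew 2-cocycle is a coboundary,
i.e. of the form (u,v) \<mapsto> f([u,v]) for a linear form f (sign irrelevant).\<close>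

definition H2_trivial :: "('a::euclidean_space \<Rightarrow> 'a \<Rightarrow> 'a) \<Rightarrow> bool" where
  "H2_trivial br \<longleftrightarrow> (\<forall>\<theta>. skew_form \<theta> \<and> cocycle2 br \<theta> \<longrightarrow>
     (\<exists>f::'a \<Rightarrow> real. linear f \<and> (\<forall>u v. \<theta> u v = f (br u v))))"

definition k_symplectic ::
  "('a::euclidean_space \<Rightarrow> 'a \<Rightarrow> 'a) \<Rightarrow> nat \<Rightarrow> nat \<Rightarrow> 'a set \<Rightarrow> (nat \<Rightarrow> 'a \<Rightarrow> 'a \<Rightarrow> real) \<Rightarrow> bool" where
  "k_symplectic br n k h \<theta> \<longleftrightarrow>
     n \<ge> 1 \<and> k \<ge> 1 \<and> DIM('a) = n * (k + 1) \<and>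
     subspace h \<and> dim h = n * k \<and> (\<forall>u\<in>h. \<forall>v\<in>h. br u v \<in> h) \<and>
     (\<forall>u. (\<forall>i\<in>{1..k}. \<forall>v. \<theta> i u v = 0) \<longrightarrow> u = 0) \<and>
     (\<forall>i\<in>{1..k}. skew_form (\<theta> i) \<and> cocycle2 br (\<theta> i)) \<and>
     (\<forall>i\<in>{1..k}. \<forall>u\<in>h. \<forall>v\<in>h. \<theta> i u v = 0)"

end

theory Submission imports Defs begin

lemma riesz_B:
  fixes B :: "'a::euclidean_space \<Rightarrow> 'a \<Rightarrow> real"
  assumes bl: "bilinear B" and nd: "\<forall>u. (\<forall>v. B u v = 0) \<longrightarrow> u = 0" and lf: "linear f"
  shows "\<exists>z. \<forall>x. f x = B z x"
proof -
  define T where "T z = (\<Sum>b\<in>Basis. B z b *\<^sub>R b)" for z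
  have linB2: "linear (\<lambda>y. B z y)" for z using bl by (simp add: bilinear_def)
  have lT: "linear T"
    by (rule linearI) (simp_all add: T_def bilinear_ladd[OF bl] bilinear_lmul[OF bl]
        scaleR_add_left sum.distrib scaleR_sum_right)
  have Tb: "T z \<bullet> b = B z b" if "b \<in> Basis" for z b
    using that by (simp add: T_def inner_sum_left inner_Basis if_distrib cong: if_cong)
  have "inj T"
    unfolding linear_injective_0[OF lT]
  proof (intro allI impI)
    fix z assume "T z = 0"
    then have "\<forall>b\<in>Basis. B z b = 0" using Tb by (metis inner_zero_left)
    then have "(\<lambda>y. B z y) = (\<lambda>y. 0)"
      by (intro linear_eq_stdbasis linB2) (auto simp: linear_zero)
    then show "z = 0" using nd by metis
  qed
  then have "surj T" using linear_injective_imp_surjective[OF lT] by simp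
  then obtain z where z: "T z = (\<Sum>b\<in>Basis. f b *\<^sub>R b)" by (metis surjD)
  have "f = (\<lambda>y. B z y)"
  proof (rule linear_eq_stdbasis[OF lf linB2])
    fix b :: 'a assume b: "b \<in> Basis"
    have "B z b = T z \<bullet> b" using Tb[OF b] by simp
    also have "\<dots> = f b" unfolding z using b
      by (simp add: inner_sum_left inner_Basis if_distrib cong: if_cong)
    finally show "f b = B z b" by simp
  qed
  then show ?thesis by metis
qed

lemma rank_nullity_le:
  fixes f :: "'a::euclidean_space \<Rightarrow> 'b::euclidean_space"
  assumes lf: "linear f" and S: "subspace S"
  shows "dim S \<le> dim {x\<in>S. f x = 0} + dim (f ` S)"
proof -
  define A where "A = {x\<in>S. f x = 0}"
  define T where "T = {y \<in> S. \<forall>x\<in>A. orthogonal x y}"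
  have sA: "subspace A" using S unfolding A_def subspace_def
    by (auto simp: linear_add[OF lf] linear_scale[OF lf] linear_0[OF lf])
  have sT: "subspace T" using S unfolding T_def subspace_def
    by (auto simp: orthogonal_clauses)
  have eq: "dim T + dim A = dim S" unfolding T_def
    by (rule dim_subspace_orthogonal_to_vectors[OF sA S]) (auto simp: A_def)
  have "inj_on f (span T)"
    unfolding span_eq_iff[THEN iffD2, OF sT]
  proof (rule linear_inj_on_iff_eq_0[THEN iffD2, OF lf sT], intro ballI impI)
    fix y assume y: "y \<in> T" "f y = 0"
    then have "y \<in> A" by (auto simp: A_def T_def)
    then have "orthogonal y y" using y by (auto simp: T_def)
    then show "y = 0" by (simp add: orthogonal_def)
  qed
  then have "dim (f ` T) = dim T" by (rule dim_image_eq[OF lf])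
  moreover have "dim (f ` T) \<le> dim (f ` S)" by (rule dim_subset) (auto simp: T_def)
  ultimately show ?thesis using eq by (simp add: A_def)
qed

lemma subspace_kers:
  assumes "subspace S" "\<forall>i\<in>I. linear (g i)"
  shows "subspace {x\<in>S. \<forall>i\<in>I. g i x = 0}"
  using assms unfolding subspace_def
  by (simp add: linear_add linear_scale linear_0)

lemma rank_sum:
  fixes g :: "nat \<Rightarrow> 'a::euclidean_space \<Rightarrow> 'b::euclidean_space"
  assumes S: "subspace S" and lg: "\<forall>i. linear (g i)"
  shows "dim S \<le> dim {x\<in>S. \<forall>i\<in>{1..m}. g i x = 0} + (\<Sum>i=1..m. dim (g i ` S))"
proof (induction m)
  case 0
  have "{x\<in>S. \<forall>i\<in>{1..0::nat}. g i x = 0} = S" by auto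
  then show ?case by simp
next
  case (Suc m)
  define L where "L = {x\<in>S. \<forall>i\<in>{1..m}. g i x = 0}"
  have sL: "subspace L" unfolding L_def
    by (rule subspace_kers[OF S]) (simp add: lg)
  have eqL: "{x\<in>L. g (Suc m) x = 0} = {x\<in>S. \<forall>i\<in>{1..Suc m}. g i x = 0}"
  proof -
    have "{1..Suc m} = insert (Suc m) {1..m}" by (rule atLeastAtMostSuc_conv) simp
    then show ?thesis unfolding L_def by (simp add: conj_commute conj_left_commute)
  qed
  have "dim L \<le> dim {x\<in>L. g (Suc m) x = 0} + dim (g (Suc m) ` L)"
    by (rule rank_nullity_le[OF lg[rule_format] sL])
  moreover have "dim (g (Suc m) ` L) \<le> dim (g (Suc m) ` S)"
    by (rule dim_subset, rule image_mono) (unfold L_def, blast)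
  moreover have "dim S \<le> dim L + (\<Sum>i=1..m. dim (g i ` S))"
    using Suc.IH unfolding L_def .
  ultimately have "dim S \<le> dim {x\<in>L. g (Suc m) x = 0} + (\<Sum>i=1..Suc m. dim (g i ` S))"
    by simp
  then show ?case unfolding eqL .
qed
theorem mainTheorem5:
  fixes br :: "'a::euclidean_space \<Rightarrow> 'a \<Rightarrow> 'a"
    and B :: "'a \<Rightarrow> 'a \<Rightarrow> real"
    and h :: "'a set"
    and \<theta> :: "nat \<Rightarrow> 'a \<Rightarrow> 'a \<Rightarrow> real"
    and n k :: nat
  assumes "lie_bracket br"
    and "quadratic_form br B"
    and "H2_trivial br"
    and "k_symplectic br n k h \<theta>"
  shows "\<exists>u\<in>h. u \<noteq> 0 \<and> (\<forall>v\<in>h. B u v = 0)"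
proof (rule ccontr)
  assume contra: "\<not> (\<exists>u\<in>h. u \<noteq> 0 \<and> (\<forall>v\<in>h. B u v = 0))"
  have blbr: "bilinear br" and alt: "\<And>u. br u u = 0"
    using assms(1) unfolding lie_bracket_def by auto
  have blB: "bilinear B" and symB: "\<And>u v. B u v = B v u"
    and ndB: "\<forall>u. (\<forall>v. B u v = 0) \<longrightarrow> u = 0"
    and invB: "\<And>u v w. B (br u v) w + B (br u w) v = 0"
    using assms(2) unfolding quadratic_form_def by auto
  have H2: "\<And>\<phi>. skew_form \<phi> \<Longrightarrow> cocycle2 br \<phi> \<Longrightarrow>
     \<exists>f::'a \<Rightarrow> real. linear f \<and> (\<forall>u v. \<phi> u v = f (br u v))"
    using assms(3) unfolding H2_trivial_def by blast
  have n1: "n \<ge> 1" and k1: "k \<ge> 1" and DIMa: "DIM('a) = n * (k + 1)"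
    and sh: "subspace h" and dimh: "dim h = n * k"
    and clos: "\<And>u v. u \<in> h \<Longrightarrow> v \<in> h \<Longrightarrow> br u v \<in> h"
    and ker: "\<And>u. (\<forall>i\<in>{1..k}. \<forall>v. \<theta> i u v = 0) \<Longrightarrow> u = 0"
    and sk: "\<And>i. i \<in> {1..k} \<Longrightarrow> skew_form (\<theta> i) \<and> cocycle2 br (\<theta> i)"
    and iso: "\<And>i u v. i \<in> {1..k} \<Longrightarrow> u \<in> h \<Longrightarrow> v \<in> h \<Longrightarrow> \<theta> i u v = 0"
    using assms(4) unfolding k_symplectic_def by auto
  have anti: "br u v = - br v u" for u v
  proof -
    have "br (u + v) (u + v) = br u u + br v u + (br u v + br v v)"
      by (simp only: bilinear_ladd[OF blbr] bilinear_radd[OF blbr])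
    then have "br u v + br v u = 0" by (simp add: alt add.commute)
    then show ?thesis by (simp add: eq_neg_iff_add_eq_0)
  qed
  have "\<forall>i\<in>{1..k}. \<exists>z. \<forall>u v. \<theta> i u v = B (br z u) v"
  proof
    fix i assume i: "i \<in> {1..k}"
    obtain f where lf: "linear f" and f: "\<forall>u v. \<theta> i u v = f (br u v)"
      using H2 sk[OF i] by blast
    obtain z where z: "\<forall>x. f x = B z x" using riesz_B[OF blB ndB lf] by blast
    have "\<theta> i u v = B (br z u) v" for u v
    proof -
      have "\<theta> i u v = B (br u v) z" using f z symB by metis
      also have "\<dots> = - B (br u z) v" using invB[of u v z] by linarith
      also have "\<dots> = B (br z u) v" by (simp add: anti[of u z] bilinear_lneg[OF blB])
      finally show ?thesis .
    qed
    then show "\<exists>z. \<forall>u v. \<theta> i u v = B (br z u) v" by blast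
  qed
  then obtain z where z: "\<And>i u v. i \<in> {1..k} \<Longrightarrow> \<theta> i u v = B (br (z i) u) v"
    by metis
  define ad where "ad i u = br (z i) u" for i u
  have lad: "\<forall>i. linear (ad i)" using blbr unfolding ad_def bilinear_def by simp
  define hp where "hp = {w. \<forall>v\<in>h. B w v = 0}"
  have shp: "subspace hp" unfolding hp_def subspace_def
    by (simp add: bilinear_lzero[OF blB] bilinear_ladd[OF blB] bilinear_lmul[OF blB])
  have int0: "h \<inter> hp \<subseteq> {0}" using contra unfolding hp_def by blast
  have adh: "ad i u \<in> hp" if "i \<in> {1..k}" "u \<in> h" for i u
    unfolding hp_def ad_def using z[OF that(1)] iso[OF that] by auto
  have "dim {x + y |x y. x \<in> h \<and> y \<in> hp} + dim (h \<inter> hp) = dim h + dim hp"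
    by (rule dim_sums_Int[OF sh shp])
  moreover have "dim (h \<inter> hp) = 0" using int0 by simp
  moreover have dsum: "dim {x + y |x y. x \<in> h \<and> y \<in> hp} \<le> DIM('a)"
    by (rule dim_subset_UNIV)
  ultimately have dhp: "dim hp \<le> n" using DIMa dimh by (simp add: algebra_simps)
  have "dim h \<le> dim {x\<in>h. \<forall>i\<in>{1..k}. ad i x = 0} + (\<Sum>i=1..k. dim (ad i ` h))"
    by (rule rank_sum[OF sh lad])
  moreover have "dim {x\<in>h. \<forall>i\<in>{1..k}. ad i x = 0} = 0"
  proof -
    have "{x\<in>h. \<forall>i\<in>{1..k}. ad i x = 0} \<subseteq> {0}"
    proof
      fix x assume "x \<in> {x\<in>h. \<forall>i\<in>{1..k}. ad i x = 0}"
      then have "\<forall>i\<in>{1..k}. \<forall>v. \<theta> i x v = 0"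
        using z by (simp add: ad_def bilinear_lzero[OF blB])
      then show "x \<in> {0}" using ker by simp
    qed
    then show ?thesis by simp
  qed
  ultimately have sumge: "n * k \<le> (\<Sum>i=1..k. dim (ad i ` h))" using dimh by linarith
  have dle: "dim (ad i ` h) \<le> n" if "i \<in> {1..k}" for i
  proof -
    have "dim (ad i ` h) \<le> dim hp" by (rule dim_subset) (use adh that in blast)
    then show ?thesis using dhp by simp
  qed
  obtain k' where kk: "k = Suc k'" using k1 by (cases k) auto
  have "(\<Sum>i=1..k. dim (ad i ` h)) = dim (ad 1 ` h) + (\<Sum>i=2..k. dim (ad i ` h))"
    using k1 by (simp add: sum.atLeast_Suc_atMost numeral_2_eq_2)
  moreover have "(\<Sum>i=2..k. dim (ad i ` h)) \<le> (\<Sum>i=2..k. n)"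
    by (rule sum_mono) (use dle in auto)
  moreover have "(\<Sum>i=2..k. n) = k' * n" using kk by simp
  ultimately have "n * k \<le> dim (ad 1 ` h) + k' * n" using sumge by linarith
  then have d1: "n \<le> dim (ad 1 ` h)" using kk by (simp add: algebra_simps)
  have one: "(1::nat) \<in> {1..k}" using k1 by simp
  have sub1: "ad 1 ` h \<subseteq> hp" using adh[OF one] by blast
  have "dim (ad 1 ` h) \<le> dim hp" by (rule dim_subset[OF sub1])
  then have dhpn: "dim hp = n" and d1n: "dim (ad 1 ` h) = n" using d1 dhp by auto
  have img: "ad 1 ` h = hp"
    by (rule subspace_dim_equal[OF linear_subspace_image[OF lad[rule_format] sh] shp sub1])
       (simp only: dhpn d1n)
  define SS where "SS = {x + y |x y. x \<in> h \<and> y \<in> hp}"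
  have sSS: "subspace SS" unfolding SS_def by (rule subspace_sums[OF sh shp])
  have "dim SS + dim (h \<inter> hp) = dim h + dim hp" unfolding SS_def by (rule dim_sums_Int[OF sh shp])
  then have "dim SS = n * k + n" using \<open>dim (h \<inter> hp) = 0\<close> dimh dhpn by linarith
  then have "dim SS = DIM('a)" using DIMa by (simp add: algebra_simps)
  then have "span SS = UNIV" by (rule dim_eq_full[THEN iffD1])
  then have full0: "SS = UNIV" using span_eq_iff[THEN iffD2, OF sSS] by (simp only:)
  have full: "{x + y |x y. x \<in> h \<and> y \<in> hp} = UNIV" using full0 unfolding SS_def .
  have Bz1: "B (z 1) d = 0" if dhp: "d \<in> hp" for d
  proof -
    obtain u where "d = br (z 1) u" using dhp img unfolding ad_def by blast
    then have "B (z 1) d = B (br (z 1) u) (z 1)" using symB[of "z 1" d] by (simp only:)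
    also have "\<dots> = - B (br (z 1) (z 1)) u" using invB[of "z 1" u "z 1"] by linarith
    also have "\<dots> = 0" by (simp add: alt bilinear_lzero[OF blB])
    finally show ?thesis .
  qed
  have "z 1 \<in> {x + y |x y. x \<in> h \<and> y \<in> hp}" unfolding full by (rule UNIV_I)
  then obtain a b where ab: "a \<in> h" "b \<in> hp" "z 1 = a + b" by blast
  have "\<forall>v. B b v = 0"
  proof
    fix v
    have "v \<in> {x + y |x y. x \<in> h \<and> y \<in> hp}" unfolding full by (rule UNIV_I)
    then obtain c d where cd: "c \<in> h" "d \<in> hp" "v = c + d" by blast
    have "B b c = 0" using ab cd unfolding hp_def by simp
    moreover have "B a d = 0" using ab(1) cd(2) symB[of a d] unfolding hp_def by simp
    moreover have "B b d = B (z 1) d - B a d" using ab by (simp add: bilinear_ladd[OF blB])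
    ultimately show "B b v = 0" using Bz1[OF cd(2)] cd
      by (simp add: bilinear_radd[OF blB])
  qed
  then have "b = 0" using ndB by blast
  then have zh: "z 1 \<in> h" using ab by simp
  have "hp \<subseteq> {0}"
  proof
    fix w assume "w \<in> hp"
    then obtain u where u: "u \<in> h" "w = ad 1 u" using img by blast
    then have "w \<in> h" using clos[OF zh] unfolding ad_def by simp
    then show "w \<in> {0}" using \<open>w \<in> hp\<close> int0 by blast
  qed
  then have "dim hp = 0" by simp
  then show False using dhpn n1 by simp
qed

end
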